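(* There are absolute constants $c>0$ and $k_0$ such that the following holds. Let $J$ be an interval and $\mathcal{F}$ a finite set of pairwise distinct functions, each defined on all of $J$ and of the form $t\mapsto\sqrt{at^2+bt+c'}$ on $J$ (so any two of them intersect at most twice on $J$). Let $k$ be the complexity of the lower envelope $L=\min_{f\in\mathcal{F}}f$ restricted to $J$, i.e. the number of maximal subintervals of $J$ on which $L$ coincides with a single function of $\mathcal{F}$. If $k\ge k_0$, then there are at least $ck^2$ intersections of functions in $\mathcal{F}$ that do not lie on $L$, i.e. pairs $\{f,g\}\subseteq\mathcal{F}$ and times $t\in J$ with $f(t)=g(t)>L(t)$. *)

theory Defs
  imports "HOL-Analysis.Analysis"
begin

definition sqrt_quadratic_on :: "real set \<Rightarrow> (real \<Rightarrow> real) \<Rightarrow> bool" where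
  "sqrt_quadratic_on J f \<longleftrightarrow>
     (\<exists>a b c. \<forall>t\<in>J. a * t\<^sup>2 + b * t + c \<ge> 0 \<and> f t = sqrt (a * t\<^sup>2 + b * t + c))"

definition lower_env :: "(real \<Rightarrow> real) set \<Rightarrow> real \<Rightarrow> real" where
  "lower_env F t = Min ((\<lambda>f. f t) ` F)"

definition env_piece :: "real set \<Rightarrow> (real \<Rightarrow> real) set \<Rightarrow> real set \<Rightarrow> bool" where
  "env_piece J F I \<longleftrightarrow> I \<noteq> {} \<and> I \<subseteq> J \<and> is_interval I \<and>
     (\<exists>f\<in>F. \<forall>t\<in>I. f t = lower_env F t)"

definition env_complexity :: "real set \<Rightarrow> (real \<Rightarrow> real) set \<Rightarrow> nat" where
  "env_complexity J F = card {I. env_piece J F I \<and> (\<forall>I'. env_piece J F I' \<and> I \<subseteq> I' \<longrightarrow> I' = I)}"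

definition off_env_intersections :: "real set \<Rightarrow> (real \<Rightarrow> real) set \<Rightarrow> ((real \<Rightarrow> real) set \<times> real) set" where
  "off_env_intersections J F = {({f, g}, t) | f g t. f \<in> F \<and> g \<in> F \<and> f \<noteq> g \<and> t \<in> J \<and>
       f t = g t \<and> f t > lower_env F t}"

end

theory Submission
  imports Defs
begin

lemma count_lemma:
  fixes P U :: "real set" and lab :: "real \<Rightarrow> 'b"
  assumes finP: "finite P" and PU: "P \<subseteq> U" and finL: "finite (lab ` U)"
  and abab: "\<And>p1 p2 p3 p4. p1\<in>U \<Longrightarrow> p2\<in>U \<Longrightarrow> p3\<in>U \<Longrightarrow> p4\<in>U \<Longrightarrow> p1<p2 \<Longrightarrow> p2<p3 \<Longrightarrow> p3<p4
      \<Longrightarrow> lab p1 = lab p3 \<Longrightarrow> lab p2 = lab p4 \<Longrightarrow> lab p1 = lab p2"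
  and sep: "\<And>p p'. p\<in>P \<Longrightarrow> p'\<in>P \<Longrightarrow> p<p' \<Longrightarrow> lab p = lab p' \<Longrightarrow> \<exists>s\<in>U. p<s \<and> s<p' \<and> lab s \<noteq> lab p"
  shows "card P \<le> 4 * card (lab ` U) + 1"
proof (cases "P = {}")
  case True then show ?thesis by simp
next
  case False
  define mx where "mx = Max P"
  define succ where "succ p = Min {q\<in>P. p<q}" for p
  have succ: "succ p \<in> P \<and> p < succ p \<and> (\<forall>q\<in>P. p<q \<longrightarrow> succ p \<le> q)" if "p \<in> P" "p \<noteq> mx" for p
  proof -
    have "p < mx" using that Max_ge[OF finP, of p] unfolding mx_def by auto
    hence ne: "{q\<in>P. p<q} \<noteq> {}" using Max_in[OF finP False] unfolding mx_def by auto
    have fin: "finite {q\<in>P. p<q}" using finP by auto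
    have "Min {q\<in>P. p<q} \<in> {q\<in>P. p<q}" using Min_in[OF fin ne] .
    moreover have "\<forall>q\<in>P. p<q \<longrightarrow> Min {q\<in>P. p<q} \<le> q" using Min_le[OF fin] by blast
    ultimately show ?thesis unfolding succ_def by blast
  qed
  define LastO where "LastO = {p\<in>P. \<forall>q\<in>P. p<q \<longrightarrow> lab q \<noteq> lab p}"
  define FirstO where "FirstO = {p\<in>P. \<forall>q\<in>P. q<p \<longrightarrow> lab q \<noteq> lab p}"
  define SS where "SS = {p\<in>P. p \<noteq> mx \<and> lab (succ p) = lab p}"
  define Pre where "Pre = {p\<in>P. p \<noteq> mx \<and> succ p \<in> FirstO}"
  define sepf where "sepf p = (SOME s. s\<in>U \<and> p<s \<and> s < succ p \<and> lab s \<noteq> lab p)" for p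
  have c1: "card LastO \<le> card (lab ` U)"
  proof -
    have "inj_on lab LastO"
    proof (rule inj_onI)
      fix p q assume a: "p\<in>LastO" "q\<in>LastO" "lab p = lab q"
      show "p = q"
      proof (rule ccontr)
        assume "p \<noteq> q" hence "p<q \<or> q<p" by linarith
        then show False using a unfolding LastO_def by auto
      qed
    qed
    moreover have "lab ` LastO \<subseteq> lab ` U" using PU unfolding LastO_def by auto
    ultimately show ?thesis using card_inj_on_le finL by blast
  qed
  have c2: "card FirstO \<le> card (lab ` U)"
  proof -
    have "inj_on lab FirstO"
    proof (rule inj_onI)
      fix p q assume a: "p\<in>FirstO" "q\<in>FirstO" "lab p = lab q"
      show "p = q"
      proof (rule ccontr)
        assume "p \<noteq> q" hence "p<q \<or> q<p" by linarith
        then show False using a unfolding FirstO_def by auto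
      qed
    qed
    moreover have "lab ` FirstO \<subseteq> lab ` U" using PU unfolding FirstO_def by auto
    ultimately show ?thesis using card_inj_on_le finL by blast
  qed
  have c3: "card Pre \<le> card FirstO"
  proof -
    have "inj_on succ Pre"
    proof (rule inj_onI)
      fix p1 p2 assume a: "p1 \<in> Pre" "p2 \<in> Pre" "succ p1 = succ p2"
      show "p1 = p2"
      proof (rule ccontr)
        assume "p1 \<noteq> p2"
        then consider "p1 < p2" | "p2 < p1" by linarith
        then show False
        proof cases
          case 1
          have "succ p1 \<le> p2" using succ[of p1] 1 a(1,2) unfolding Pre_def by auto
          moreover have "p2 < succ p2" using succ[of p2] a(2) unfolding Pre_def by auto
          ultimately show False using a(3) by linarith
        next
          case 2
          have "succ p2 \<le> p1" using succ[of p2] 2 a(1,2) unfolding Pre_def by auto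
          moreover have "p1 < succ p1" using succ[of p1] a(1) unfolding Pre_def by auto
          ultimately show False using a(3) by linarith
        qed
      qed
    qed
    moreover have "succ ` Pre \<subseteq> FirstO" unfolding Pre_def by auto
    moreover have "finite FirstO" using finP unfolding FirstO_def by auto
    ultimately show ?thesis using card_inj_on_le by blast
  qed
  have sepf: "sepf p \<in> U \<and> p < sepf p \<and> sepf p < succ p \<and> lab (sepf p) \<noteq> lab p" if "p \<in> SS" for p
  proof -
    have "\<exists>s\<in>U. p<s \<and> s<succ p \<and> lab s \<noteq> lab p"
      using sep[of p "succ p"] succ[of p] that unfolding SS_def by auto
    then show ?thesis unfolding sepf_def by (rule someI_ex[where P="\<lambda>s. s\<in>U \<and> p<s \<and> s < succ p \<and> lab s \<noteq> lab p", OF bexE]) auto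
  qed
  have c4: "card SS \<le> card (lab ` U)"
  proof -
    have "inj_on (\<lambda>p. lab (sepf p)) SS"
    proof (rule inj_onI)
      fix p1 p2 assume a: "p1 \<in> SS" "p2 \<in> SS" "lab (sepf p1) = lab (sepf p2)"
      have gen: False if "q1 \<in> SS" "q2 \<in> SS" "q1 < q2" "lab (sepf q1) = lab (sepf q2)" for q1 q2
      proof -
        have s1: "succ q1 \<le> q2" using succ[of q1] that unfolding SS_def by auto
        have "q1 \<in> U" "succ q1 \<in> U" using that succ[of q1] PU unfolding SS_def by auto
        have "lab q1 = lab (sepf q1)"
          apply (rule abab[of q1 "sepf q1" "succ q1" "sepf q2"])
          using that sepf[of q1] sepf[of q2] s1 succ[of q1] PU unfolding SS_def by auto
        then show False using sepf[of q1] that(1) by simp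
      qed
      show "p1 = p2"
      proof (rule ccontr)
        assume "p1 \<noteq> p2"
        then consider "p1 < p2" | "p2 < p1" by linarith
        then show False using gen[of p1 p2] gen[of p2 p1] a by auto
      qed
    qed
    moreover have "(\<lambda>p. lab (sepf p)) ` SS \<subseteq> lab ` U" using sepf by auto
    ultimately show ?thesis using card_inj_on_le finL by blast
  qed
  have cover: "P \<subseteq> {mx} \<union> LastO \<union> Pre \<union> SS"
  proof
    fix p assume pP: "p \<in> P"
    show "p \<in> {mx} \<union> LastO \<union> Pre \<union> SS"
    proof (rule ccontr)
      assume n: "p \<notin> {mx} \<union> LastO \<union> Pre \<union> SS"
      hence nm: "p \<noteq> mx" by auto
      note sp = succ[OF pP nm]
      have d: "lab (succ p) \<noteq> lab p" using n pP nm unfolding SS_def by auto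
      obtain q where q: "q \<in> P" "p < q" "lab q = lab p" using n pP unfolding LastO_def by auto
      obtain q' where q': "q' \<in> P" "q' < succ p" "lab q' = lab (succ p)"
        using n pP nm sp unfolding Pre_def FirstO_def by auto
      have "q' \<le> p" using q' sp by (meson not_le)
      hence "q' < p" using q'(3) d by (cases "q' = p") auto
      have "succ p \<le> q" using sp q by auto
      hence "succ p < q" using q(3) d by (cases "q = succ p") auto
      have "lab q' = lab p"
        apply (rule abab[of q' p "succ p" q])
        using \<open>q' < p\<close> \<open>succ p < q\<close> q q' sp pP PU by auto
      then show False using q' d by simp
    qed
  qed
  have "card P \<le> card ({mx} \<union> LastO \<union> Pre \<union> SS)"
    by (rule card_mono[OF _ cover]) (use finP in \<open>auto simp: LastO_def Pre_def SS_def\<close>)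
  also have "\<dots> \<le> card ({mx} \<union> LastO \<union> Pre) + card SS" by (rule card_Un_le)
  also have "\<dots> \<le> card ({mx} \<union> LastO) + card Pre + card SS" using card_Un_le[of "{mx} \<union> LastO" Pre] by linarith
  also have "\<dots> \<le> 1 + card LastO + card Pre + card SS" using card_Un_le[of "{mx}" LastO] by simp
  finally show ?thesis using c1 c2 c3 c4 by linarith
qed

lemma pairs_between:
  fixes S :: "'a set" and \<tau> :: "'a \<Rightarrow> real"
  assumes "finite S" "inj_on \<tau> S"
  shows "(card S - 1) * (card S - 2) \<le> 2 * card {(f,g) \<in> S\<times>S. \<tau> f < \<tau> g \<and> (\<exists>h\<in>S. \<tau> f < \<tau> h \<and> \<tau> h < \<tau> g)}"
  using assms
proof (induction "card S" arbitrary: S)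
  case 0 then show ?case by simp
next
  case (Suc n)
  define Q where "Q S = {(f,g) \<in> S\<times>S. \<tau> f < \<tau> g \<and> (\<exists>h\<in>S. \<tau> f < \<tau> h \<and> \<tau> h < \<tau> g)}" for S
  have ne: "S \<noteq> {}" using Suc.hyps(2) by auto
  have "Max (\<tau> ` S) \<in> \<tau> ` S" using Max_in[of "\<tau> ` S"] Suc.prems ne by auto
  then obtain x where x: "x \<in> S" "\<tau> x = Max (\<tau> ` S)" by auto
  have xmax: "\<tau> y < \<tau> x" if "y \<in> S" "y \<noteq> x" for y
  proof -
    have "\<tau> y \<le> \<tau> x" using x that Suc.prems by simp
    moreover have "\<tau> y \<noteq> \<tau> x" using Suc.prems(2) that x(1) inj_on_def by metis
    ultimately show ?thesis by simp
  qed
  define S' where "S' = S - {x}"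
  have cS': "card S' = n" using Suc.hyps(2) x(1) Suc.prems(1) unfolding S'_def by simp
  have IH: "(n - 1) * (n - 2) \<le> 2 * card (Q S')"
    using Suc.hyps(1)[of S'] cS' Suc.prems unfolding Q_def S'_def by (auto intro: inj_on_subset)
  show ?case
  proof (cases "n = 0")
    case True then show ?thesis using Suc.hyps(2) by simp
  next
    case False
    have neS': "S' \<noteq> {}" using cS' False by auto
    have finS': "finite S'" using Suc.prems(1) unfolding S'_def by simp
    have "Max (\<tau> ` S') \<in> \<tau> ` S'" using Max_in[of "\<tau> ` S'"] finS' neS' by auto
    then obtain y where y: "y \<in> S'" "\<tau> y = Max (\<tau> ` S')" by auto
    have ymax: "\<tau> f < \<tau> y" if "f \<in> S'" "f \<noteq> y" for f
    proof -
      have "\<tau> f \<le> \<tau> y" using y that finS' by simp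
      moreover have "\<tau> f \<noteq> \<tau> y" using Suc.prems(2) that y(1) unfolding S'_def inj_on_def by blast
      ultimately show ?thesis by simp
    qed
    define R where "R = (\<lambda>f. (f, x)) ` (S' - {y})"
    have cR: "card R = n - 1" unfolding R_def using finS' y(1) cS'
      by (subst card_image) (auto simp: inj_on_def)
    have sub: "Q S' \<union> R \<subseteq> Q S"
    proof
      fix p assume "p \<in> Q S' \<union> R"
      then show "p \<in> Q S"
      proof
        assume "p \<in> Q S'" then show ?thesis unfolding Q_def S'_def by auto
      next
        assume "p \<in> R"
        then obtain f where f: "f \<in> S'" "f \<noteq> y" "p = (f, x)" unfolding R_def by auto
        have "\<tau> f < \<tau> y" using ymax f by simp
        moreover have "\<tau> y < \<tau> x" using xmax y(1) unfolding S'_def by simp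
        moreover have "y \<in> S" "f \<in> S" using y(1) f(1) unfolding S'_def by auto
        ultimately show ?thesis unfolding Q_def using f(3) x(1) by auto
      qed
    qed
    have disj: "Q S' \<inter> R = {}" unfolding Q_def R_def S'_def by auto
    have finQ: "finite (Q S)" unfolding Q_def using Suc.prems(1) by (auto intro: finite_subset[of _ "S \<times> S"])
    have finU: "finite (Q S' \<union> R)" using finite_subset[OF sub finQ] .
    have "card (Q S') + card R = card (Q S' \<union> R)"
      using card_Un_disjoint[of "Q S'" R] disj finU by simp
    also have "\<dots> \<le> card (Q S)" using card_mono[OF finQ sub] .
    finally have "card (Q S') + (n - 1) \<le> card (Q S)" using cR by simp
    moreover have "(Suc n - 1) * (Suc n - 2) = (n - 1) * (n - 2) + 2 * (n - 1)"
      using False by (cases n; cases "n - 1") (auto simp: algebra_simps)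
    ultimately show ?thesis using IH Suc.hyps(2) unfolding Q_def by simp
  qed
qed

lemma pairs_count:
  fixes M :: "'a set" and \<tau> :: "'a \<Rightarrow> real"
  assumes "finite M" "inj_on \<tau> M"
  shows "card M * card M - card M \<le> 2 * card {(f,g) \<in> M\<times>M. \<tau> f < \<tau> g}"
proof -
  define P where "P = {(f,g) \<in> M\<times>M. \<tau> f < \<tau> g}"
  have "M \<times> M \<subseteq> P \<union> prod.swap ` P \<union> (\<lambda>f. (f,f)) ` M"
  proof
    fix p assume "p \<in> M \<times> M"
    then obtain f g where fg: "p = (f,g)" "f \<in> M" "g \<in> M" by auto
    show "p \<in> P \<union> prod.swap ` P \<union> (\<lambda>f. (f,f)) ` M"
    proof (cases "f = g")
      case True then show ?thesis using fg by auto
    next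
      case False
      hence "\<tau> f \<noteq> \<tau> g" using assms(2) fg inj_on_def by metis
      hence "\<tau> f < \<tau> g \<or> \<tau> g < \<tau> f" by linarith
      then show ?thesis unfolding P_def using fg by (auto simp: image_iff)
    qed
  qed
  hence "card (M \<times> M) \<le> card (P \<union> prod.swap ` P \<union> (\<lambda>f. (f,f)) ` M)"
    by (rule card_mono[rotated]) (use assms(1) in \<open>auto simp: P_def intro: finite_subset[of _ "M\<times>M"]\<close>)
  also have "\<dots> \<le> card (P \<union> prod.swap ` P) + card ((\<lambda>f. (f,f)) ` M)" by (rule card_Un_le)
  also have "\<dots> \<le> card P + card (prod.swap ` P) + card ((\<lambda>f. (f,f)) ` M)"
    using card_Un_le[of P "prod.swap ` P"] by linarith
  also have "\<dots> \<le> card P + card P + card M"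
  proof -
    have "finite P" unfolding P_def using assms(1) by (auto intro: finite_subset[of _ "M\<times>M"])
    hence "card (prod.swap ` P) \<le> card P" by (rule card_image_le)
    moreover have "card ((\<lambda>f. (f,f)) ` M) \<le> card M" using assms(1) by (rule card_image_le)
    ultimately show ?thesis by linarith
  qed
  finally show ?thesis unfolding P_def by (simp add: card_cartesian_product)
qed

lemma quad_tangent:
  fixes \<alpha> \<beta> \<gamma> z r :: real
  assumes r: "r > 0" and nn: "\<And>t. \<bar>t - z\<bar> < r \<Longrightarrow> \<alpha>*t\<^sup>2 + \<beta>*t + \<gamma> \<ge> 0"
    and z0: "\<alpha>*z\<^sup>2 + \<beta>*z + \<gamma> = 0"
  shows "2*\<alpha>*z + \<beta> = 0"
proof (rule ccontr)
  define D where "D = 2*\<alpha>*z + \<beta>"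
  assume "2*\<alpha>*z + \<beta> \<noteq> 0"
  hence D: "D \<noteq> 0" unfolding D_def .
  define \<eta> where "\<eta> = min (1/(2*(\<bar>\<alpha>\<bar>+1))) (r/(2*(\<bar>D\<bar>+1)))"
  have \<eta>pos: "\<eta> > 0" unfolding \<eta>_def using r by (simp add: add_pos_nonneg)
  have \<eta>1: "\<eta> \<le> 1/(2*(\<bar>\<alpha>\<bar>+1))" unfolding \<eta>_def by simp
  have \<eta>2: "\<eta> \<le> r/(2*(\<bar>D\<bar>+1))" unfolding \<eta>_def by simp
  define \<delta> where "\<delta> = - D * \<eta>"
  have "\<bar>\<delta>\<bar> = \<bar>D\<bar> * \<eta>" unfolding \<delta>_def using \<eta>pos by (simp add: abs_mult)
  also have "\<dots> \<le> \<bar>D\<bar> * (r/(2*(\<bar>D\<bar>+1)))" by (rule mult_left_mono[OF \<eta>2]) simp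
  also have "\<dots> < r"
  proof -
    have "\<bar>D\<bar> * (r/(2*(\<bar>D\<bar>+1))) = r * (\<bar>D\<bar> / (2*(\<bar>D\<bar>+1)))" by simp
    moreover have "\<bar>D\<bar> / (2*(\<bar>D\<bar>+1)) < 1" by (simp add: divide_less_eq)
    ultimately show ?thesis using r by (metis mult.right_neutral mult_strict_left_mono)
  qed
  finally have "\<bar>(z + \<delta>) - z\<bar> < r" by simp
  hence nn': "\<alpha>*(z+\<delta>)\<^sup>2 + \<beta>*(z+\<delta>) + \<gamma> \<ge> 0" using nn by blast
  have exp: "\<alpha>*(z+\<delta>)\<^sup>2 + \<beta>*(z+\<delta>) + \<gamma> = \<delta> * (D + \<alpha>*\<delta>)"
    using z0 unfolding D_def by (simp add: power2_eq_square algebra_simps)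
  have ae: "\<bar>\<alpha> * \<eta>\<bar> < 1"
  proof -
    have "\<bar>\<alpha> * \<eta>\<bar> = \<bar>\<alpha>\<bar> * \<eta>" using \<eta>pos by (simp add: abs_mult)
    also have "\<dots> \<le> \<bar>\<alpha>\<bar> * (1/(2*(\<bar>\<alpha>\<bar>+1)))" by (rule mult_left_mono[OF \<eta>1]) simp
    also have "\<dots> < 1" by (simp add: divide_less_eq)
    finally show ?thesis .
  qed
  have "\<delta> * (D + \<alpha>*\<delta>) = - (D*D) * \<eta> * (1 - \<alpha>*\<eta>)" unfolding \<delta>_def by (simp add: algebra_simps)
  moreover have "D*D > 0" using D by (auto simp add: zero_less_mult_iff linorder_neq_iff)
  moreover have "1 - \<alpha>*\<eta> > 0" using ae by linarith
  ultimately have "\<delta> * (D + \<alpha>*\<delta>) < 0" using \<eta>pos by (simp add: mult_pos_pos)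
  then show False using nn' exp by linarith
qed

locale envs =
  fixes J :: "real set" and F :: "(real \<Rightarrow> real) set" and qa qb qc :: "(real \<Rightarrow> real) \<Rightarrow> real"
  assumes J: "is_interval J" and finF: "finite F" and neF: "F \<noteq> {}"
  and dist: "\<And>f g. f\<in>F \<Longrightarrow> g\<in>F \<Longrightarrow> f \<noteq> g \<Longrightarrow> \<exists>t\<in>J. f t \<noteq> g t"
  and quad: "\<And>f t. f \<in> F \<Longrightarrow> t \<in> J \<Longrightarrow> 0 \<le> qa f * t\<^sup>2 + qb f * t + qc f \<and> f t = sqrt (qa f * t\<^sup>2 + qb f * t + qc f)"
begin

definition q where "q f t = qa f * t\<^sup>2 + qb f * t + qc f"

lemma fval: "f \<in> F \<Longrightarrow> t \<in> J \<Longrightarrow> f t = sqrt (q f t)"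
  using quad unfolding q_def by blast

lemma le_iff: "f \<in> F \<Longrightarrow> g \<in> F \<Longrightarrow> t \<in> J \<Longrightarrow> f t \<le> g t \<longleftrightarrow> q f t \<le> q g t"
  using fval[of f t] fval[of g t] by simp
lemma less_iff: "f \<in> F \<Longrightarrow> g \<in> F \<Longrightarrow> t \<in> J \<Longrightarrow> f t < g t \<longleftrightarrow> q f t < q g t"
  using fval[of f t] fval[of g t] by simp
lemma eq_iff: "f \<in> F \<Longrightarrow> g \<in> F \<Longrightarrow> t \<in> J \<Longrightarrow> f t = g t \<longleftrightarrow> q f t = q g t"
  using fval[of f t] fval[of g t] by simp

lemma cont: "f \<in> F \<Longrightarrow> continuous_on J f"
proof -
  assume f: "f \<in> F"
  have "continuous_on J (\<lambda>t. sqrt (qa f * t\<^sup>2 + qb f * t + qc f))" by (intro continuous_intros)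
  moreover have "\<And>t. t \<in> J \<Longrightarrow> f t = sqrt (qa f * t\<^sup>2 + qb f * t + qc f)" using quad[OF f] by blast
  ultimately show ?thesis using continuous_on_cong[of J J f "\<lambda>t. sqrt (qa f * t\<^sup>2 + qb f * t + qc f)"] by blast
qed

lemma Jint: "a \<in> J \<Longrightarrow> b \<in> J \<Longrightarrow> a \<le> x \<Longrightarrow> x \<le> b \<Longrightarrow> x \<in> J"
  using J unfolding is_interval_1 by blast

lemma Z3:
  assumes f: "f \<in> F" and g: "g \<in> F" and fg: "f \<noteq> g"
    and t: "t1 \<in> J" "t2 \<in> J" "t3 \<in> J" "t1 \<noteq> t2" "t1 \<noteq> t3" "t2 \<noteq> t3"
    and e: "f t1 = g t1" "f t2 = g t2" "f t3 = g t3"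
  shows False
proof -
  define \<alpha> where "\<alpha> = qa f - qa g"
  define \<beta> where "\<beta> = qb f - qb g"
  define \<gamma> where "\<gamma> = qc f - qc g"
  have dd: "\<alpha> * t\<^sup>2 + \<beta> * t + \<gamma> = q f t - q g t" for t
    unfolding q_def \<alpha>_def \<beta>_def \<gamma>_def by (simp add: algebra_simps)
  have d: "\<alpha> * t\<^sup>2 + \<beta> * t + \<gamma> = 0" if "t \<in> J" "f t = g t" for t
    using eq_iff[OF f g that(1)] that(2) dd[of t] by simp
  have d1: "\<alpha> * t1\<^sup>2 + \<beta> * t1 + \<gamma> = 0" using d t e by blast
  have d2: "\<alpha> * t2\<^sup>2 + \<beta> * t2 + \<gamma> = 0" using d t e by blast
  have d3: "\<alpha> * t3\<^sup>2 + \<beta> * t3 + \<gamma> = 0" using d t e by blast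
  have fac: "(x - y) * (\<alpha> * (x + y) + \<beta>) = (\<alpha> * x\<^sup>2 + \<beta> * x + \<gamma>) - (\<alpha> * y\<^sup>2 + \<beta> * y + \<gamma>)" for x y
    by (simp add: power2_eq_square algebra_simps)
  have "(t1 - t2) * (\<alpha> * (t1 + t2) + \<beta>) = 0" using d1 d2 fac[of t1 t2] by simp
  hence e12: "\<alpha> * (t1 + t2) + \<beta> = 0" using t by simp
  have "(t1 - t3) * (\<alpha> * (t1 + t3) + \<beta>) = 0" using d1 d3 fac[of t1 t3] by simp
  hence e13: "\<alpha> * (t1 + t3) + \<beta> = 0" using t by simp
  have "\<alpha> * (t2 - t3) = (\<alpha> * (t1 + t2) + \<beta>) - (\<alpha> * (t1 + t3) + \<beta>)" by (simp add: algebra_simps)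
  hence "\<alpha> * (t2 - t3) = 0" using e12 e13 by simp
  hence a0: "\<alpha> = 0" using t by simp
  hence b0: "\<beta> = 0" using e12 by simp
  hence c0: "\<gamma> = 0" using d1 a0 by simp
  obtain t where "t \<in> J" "f t \<noteq> g t" using dist f g fg by blast
  moreover have "q f t = q g t" using a0 b0 c0 unfolding q_def \<alpha>_def \<beta>_def \<gamma>_def by simp
  ultimately show False using eq_iff[OF f g] by blast
qed

lemma Zfin: "f \<in> F \<Longrightarrow> g \<in> F \<Longrightarrow> f \<noteq> g \<Longrightarrow> finite {t\<in>J. f t = g t}"
proof (rule ccontr)
  assume a: "f \<in> F" "g \<in> F" "f \<noteq> g" "infinite {t\<in>J. f t = g t}"
  obtain G where G: "G \<subseteq> {t\<in>J. f t = g t}" "card G = 3" using infinite_arbitrarily_large[OF a(4)] by blast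
  then obtain x y z where "G = {x,y,z}" "x \<noteq> y" "y \<noteq> z" "x \<noteq> z" by (auto simp: card_3_iff)
  then show False using Z3[OF a(1-3), of x y z] G(1) by auto
qed

definition L where "L t = lower_env F t"

lemma L_le: "f \<in> F \<Longrightarrow> L t \<le> f t"
  unfolding L_def lower_env_def using finF by (intro Min_le) auto

lemma L_ex: "\<exists>f\<in>F. f t = L t"
proof -
  have "Min ((\<lambda>f. f t) ` F) \<in> (\<lambda>f. f t) ` F" using finF neF by (intro Min_in) auto
  then show ?thesis unfolding L_def lower_env_def by auto
qed

definition T where "T = {t\<in>J. \<exists>f\<in>F. \<exists>g\<in>F. f \<noteq> g \<and> f t = g t}"

lemma finT: "finite T"
proof -
  have "T \<subseteq> (\<Union>p\<in>{p\<in>F\<times>F. fst p \<noteq> snd p}. {t\<in>J. fst p t = snd p t})" unfolding T_def by auto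
  moreover have "finite {p\<in>F\<times>F. fst p \<noteq> snd p}" using finF by auto
  moreover have "finite (\<Union>p\<in>{p\<in>F\<times>F. fst p \<noteq> snd p}. {t\<in>J. fst p t = snd p t})"
    using calculation(2) Zfin by auto
  ultimately show ?thesis using finite_subset by blast
qed

definition U where "U = J - T"

definition lab where "lab t = (THE f. f \<in> F \<and> f t = L t)"

lemma lab: assumes "t \<in> U" shows "lab t \<in> F" "lab t t = L t" "\<And>g. g \<in> F \<Longrightarrow> g \<noteq> lab t \<Longrightarrow> lab t t < g t"
  and "\<And>g. g \<in> F \<Longrightarrow> g t = L t \<Longrightarrow> g = lab t"
proof -
  have tT: "t \<notin> T" "t \<in> J" using assms unfolding U_def by auto
  have uniq: "f = g" if "f \<in> F" "g \<in> F" "f t = L t" "g t = L t" for f g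
  proof (rule ccontr)
    assume "f \<noteq> g"
    moreover have "f t = g t" using that(3,4) by simp
    ultimately have "t \<in> T" unfolding T_def using that(1,2) tT(2) by blast
    then show False using tT by simp
  qed
  obtain f where f: "f \<in> F" "f t = L t" using L_ex by blast
  have lf: "lab t = f" unfolding lab_def
  proof (rule the_equality)
    show "f \<in> F \<and> f t = L t" using f by simp
    fix g assume "g \<in> F \<and> g t = L t"
    then show "g = f" using uniq[of g f] f by simp
  qed
  show "lab t \<in> F" "lab t t = L t" using lf f by auto
  show "\<And>g. g \<in> F \<Longrightarrow> g t = L t \<Longrightarrow> g = lab t"
  proof -
    fix g assume "g \<in> F" "g t = L t"
    then show "g = lab t" using uniq[of g f] f lf by simp
  qed
  show "lab t t < g t" if "g \<in> F" "g \<noteq> lab t" for g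
  proof -
    have "lab t t \<le> g t" using L_le[OF that(1)] lf f by simp
    moreover have "lab t t \<noteq> g t"
    proof
      assume "lab t t = g t"
      then have "g t = L t" using lf f by simp
      then have "g = f" using uniq[of g f] f that(1) by simp
      then show False using that(2) lf by simp
    qed
    ultimately show ?thesis by simp
  qed
qed

lemma IVT0:
  assumes f: "f \<in> F" and g: "g \<in> F" and ab: "a \<in> J" "b \<in> J" "a \<le> b"
    and sa: "f a \<le> g a" and sb: "g b \<le> f b"
  shows "\<exists>z. a \<le> z \<and> z \<le> b \<and> f z = g z"
proof -
  have sub: "{a..b} \<subseteq> J" using Jint[OF ab(1,2)] by auto
  have c1: "continuous_on J (\<lambda>t. f t - g t)" using cont[OF f] cont[OF g] by (intro continuous_intros)
  have c2: "continuous_on {a..b} (\<lambda>t. f t - g t)" by (rule continuous_on_subset[OF c1 sub])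
  have "\<exists>x. a \<le> x \<and> x \<le> b \<and> f x - g x = 0"
    by (rule IVT'[of "\<lambda>t. f t - g t" a 0 b, OF _ _ ab(3) c2]) (use sa sb in auto)
  then show ?thesis by auto
qed

lemma IVT1:
  assumes f: "f \<in> F" and g: "g \<in> F" and ab: "a \<in> J" "b \<in> J" "a \<le> b"
    and sa: "f a < g a" and sb: "g b < f b"
  shows "\<exists>z. a < z \<and> z < b \<and> f z = g z"
proof -
  obtain z where z: "a \<le> z" "z \<le> b" "f z = g z" using IVT0[OF f g ab] sa sb by force
  have "z \<noteq> a" using z sa by auto
  moreover have "z \<noteq> b" using z sb by auto
  ultimately show ?thesis using z by force
qed

lemma IVT2:
  assumes f: "f \<in> F" and g: "g \<in> F" and ab: "a \<in> J" "b \<in> J" "a \<le> b"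
    and sa: "f a > g a" and sb: "g b > f b"
  shows "\<exists>z. a < z \<and> z < b \<and> f z = g z"
  using IVT1[OF g f ab] sa sb by force

end

context envs begin

lemma lim_le:
  assumes f: "f\<in>F" and g: "g\<in>F" and a: "a \<in> J" and h: "\<And>\<delta>. \<delta>>0 \<Longrightarrow> \<exists>t\<in>J. \<bar>t - a\<bar> < \<delta> \<and> f t \<le> g t"
  shows "f a \<le> g a"
proof (rule ccontr)
  assume "\<not> f a \<le> g a"
  hence e: "f a - g a > 0" by simp
  have "continuous_on J (\<lambda>t. f t - g t)" using cont[OF f] cont[OF g] by (intro continuous_intros)
  hence "\<forall>x\<in>J. \<forall>e>0. \<exists>d>0. \<forall>x'\<in>J. dist x' x < d \<longrightarrow> dist (f x' - g x') (f x - g x) < e"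
    unfolding continuous_on_iff .
  then obtain \<delta> where \<delta>: "\<delta>>0" "\<forall>x'\<in>J. dist x' a < \<delta> \<longrightarrow> dist (f x' - g x') (f a - g a) < f a - g a"
    using a e by blast
  obtain t where t: "t\<in>J" "\<bar>t-a\<bar><\<delta>" "f t \<le> g t" using h \<delta>(1) by blast
  have "dist (f t - g t) (f a - g a) < f a - g a" using \<delta>(2) t by (simp add: dist_real_def)
  then have "\<bar>(f t - g t) - (f a - g a)\<bar> < f a - g a" by (simp add: dist_real_def)
  then show False using t(3) by (simp add: abs_less_iff)
qed

lemma nonT: "a < b \<Longrightarrow> \<exists>t. a<t \<and> t<b \<and> t \<notin> T"
proof -
  assume ab: "a < b"
  have inf: "infinite {a<..<b}" using ab by simp
  have "{a<..<b} - T \<noteq> {}"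
  proof
    assume "{a<..<b} - T = {}"
    hence "{a<..<b} \<subseteq> T" by blast
    then show False using inf finT finite_subset by blast
  qed
  then show ?thesis by auto
qed

lemma UJ: "t \<in> U \<Longrightarrow> t \<in> J" unfolding U_def by simp

lemma LCC:
  assumes a: "a\<in>J" "b\<in>J" "a<b" and nT: "\<And>t. a<t \<Longrightarrow> t<b \<Longrightarrow> t \<notin> T"
  shows "\<exists>y\<in>F. (\<forall>t. a \<le> t \<and> t \<le> b \<longrightarrow> y t = L t) \<and> (\<forall>t. a<t \<and> t<b \<longrightarrow> t \<in> U \<and> lab t = y)"
proof -
  define c where "c = (a+b)/2"
  have c: "a < c" "c < b" using a(3) unfolding c_def by auto
  have inU: "t \<in> U" if "a<t" "t<b" for t
    using nT[OF that] Jint[OF a(1,2), of t] that unfolding U_def by auto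
  define y where "y = lab c"
  have cU: "c \<in> U" using inU c by simp
  have yF: "y \<in> F" unfolding y_def using lab(1)[OF cU] .
  have labt: "lab t = y" if "a<t" "t<b" for t
  proof (rule ccontr)
    assume ne: "lab t \<noteq> y"
    have tU: "t \<in> U" using inU that by simp
    have fF: "lab t \<in> F" using lab(1)[OF tU] .
    have s1: "lab t t < y t" using lab(3)[OF tU yF] ne by simp
    have s2: "y c < lab t c" using lab(3)[OF cU fF] ne unfolding y_def by simp
    have tJ: "t \<in> J" "c \<in> J" using tU cU UJ by auto
    consider "t < c" | "t = c" | "c < t" by linarith
    then show False
    proof cases
      case 1
      obtain z where z: "t<z" "z<c" "lab t z = y z" using IVT1[OF fF yF tJ(1) tJ(2) _ s1 s2] 1 by auto
      have "z \<in> J" using Jint[OF tJ] z by simp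
      hence "z \<in> T" unfolding T_def using fF yF ne z(3) by blast
      then show False using nT[of z] z that c by simp
    next
      case 2 then show False using ne unfolding y_def by simp
    next
      case 3
      obtain z where z: "c<z" "z<t" "y z = lab t z" using IVT1[OF yF fF tJ(2) tJ(1) _ s2 s1] 3 by auto
      have "z \<in> J" using Jint[OF tJ(2) tJ(1)] z by simp
      hence "z \<in> T" unfolding T_def using fF yF ne z(3) by (metis (mono_tags, lifting) mem_Collect_eq)
      then show False using nT[of z] z that c by simp
    qed
  qed
  have inside: "y t = L t" if "a<t" "t<b" for t
    using lab(2)[OF inU[OF that]] labt[OF that] by simp
  have ya: "y a = L a"
  proof -
    obtain g where g: "g \<in> F" "g a = L a" using L_ex by blast
    have "y a \<le> g a"
    proof (rule lim_le[OF yF g(1) a(1)])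
      fix \<delta> :: real assume d: "\<delta> > 0"
      define \<mu> where "\<mu> = min \<delta> (b-a)"
      define t where "t = a + \<mu> / 2"
      have t: "a < t" "t < b" "\<bar>t - a\<bar> < \<delta>" 
      proof -
        have m: "0 < \<mu>" "\<mu> \<le> \<delta>" "\<mu> \<le> b - a" using d a(3) unfolding \<mu>_def by auto
        show "a < t" using m unfolding t_def by linarith
        show "t < b" using m unfolding t_def by linarith
        show "\<bar>t - a\<bar> < \<delta>" using m unfolding t_def by (simp add: abs_less_iff)
      qed
      have "t \<in> J" using Jint[OF a(1,2)] t by simp
      moreover have "y t \<le> g t" using inside[OF t(1,2)] L_le[OF g(1)] by simp
      ultimately show "\<exists>t\<in>J. \<bar>t - a\<bar> < \<delta> \<and> y t \<le> g t" using t by blast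
    qed
    then show ?thesis using g L_le[OF yF, of a] by simp
  qed
  have yb: "y b = L b"
  proof -
    obtain g where g: "g \<in> F" "g b = L b" using L_ex by blast
    have "y b \<le> g b"
    proof (rule lim_le[OF yF g(1) a(2)])
      fix \<delta> :: real assume d: "\<delta> > 0"
      define \<mu> where "\<mu> = min \<delta> (b-a)"
      define t where "t = b - \<mu> / 2"
      have t: "a < t" "t < b" "\<bar>t - b\<bar> < \<delta>" 
      proof -
        have m: "0 < \<mu>" "\<mu> \<le> \<delta>" "\<mu> \<le> b - a" using d a(3) unfolding \<mu>_def by auto
        show "a < t" using m unfolding t_def by linarith
        show "t < b" using m unfolding t_def by linarith
        show "\<bar>t - b\<bar> < \<delta>" using m unfolding t_def by (simp add: abs_less_iff)
      qed
      have "t \<in> J" using Jint[OF a(1,2)] t by simp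
      moreover have "y t \<le> g t" using inside[OF t(1,2)] L_le[OF g(1)] by simp
      ultimately show "\<exists>t\<in>J. \<bar>t - b\<bar> < \<delta> \<and> y t \<le> g t" using t by blast
    qed
    then show ?thesis using g L_le[OF yF, of b] by simp
  qed
  have "\<forall>t. a \<le> t \<and> t \<le> b \<longrightarrow> y t = L t"
  proof (intro allI impI)
    fix t assume "a \<le> t \<and> t \<le> b"
    then consider "t = a" | "t = b" | "a < t \<and> t < b" by linarith
    then show "y t = L t" using ya yb inside by cases auto
  qed
  then show ?thesis using yF inU labt by blast
qed

lemma abab_lab:
  assumes p: "p1\<in>U" "p2\<in>U" "p3\<in>U" "p4\<in>U" "p1<p2" "p2<p3" "p3<p4"
    and l: "lab p1 = lab p3" "lab p2 = lab p4"
  shows "lab p1 = lab p2"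
proof (rule ccontr)
  assume ne: "lab p1 \<noteq> lab p2"
  define a where "a = lab p1"
  define b where "b = lab p2"
  have aF: "a \<in> F" and bF: "b \<in> F" unfolding a_def b_def using lab(1) p by auto
  have ab: "a \<noteq> b" using ne unfolding a_def b_def .
  have J4: "p1 \<in> J" "p2 \<in> J" "p3 \<in> J" "p4 \<in> J" using p UJ by auto
  have s1: "a p1 < b p1" using lab(3)[OF p(1) bF] ab unfolding a_def by simp
  have s2: "b p2 < a p2" using lab(3)[OF p(2) aF] ab unfolding b_def by simp
  have s3: "a p3 < b p3" using lab(3)[OF p(3) bF] ab l unfolding a_def by simp
  have s4: "b p4 < a p4" using lab(3)[OF p(4) aF] ab l unfolding b_def by simp
  obtain z1 where z1: "p1<z1" "z1<p2" "a z1 = b z1" using IVT1[OF aF bF J4(1,2) _ s1 s2] p by auto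
  obtain z2 where z2: "p2<z2" "z2<p3" "a z2 = b z2" using IVT2[OF aF bF J4(2,3) _ s2 s3] p by auto
  obtain z3 where z3: "p3<z3" "z3<p4" "a z3 = b z3" using IVT1[OF aF bF J4(3,4) _ s3 s4] p by auto
  have "z1 \<in> J" "z2 \<in> J" "z3 \<in> J" using Jint J4 z1 z2 z3 by (meson less_imp_le)+
  then show False using Z3[OF aF bF ab, of z1 z2 z3] z1 z2 z3 by auto
qed

lemma QL:
  assumes f: "f\<in>F" and g: "g\<in>F" and y: "y\<in>F" and ab: "a\<in>J" "b\<in>J" "a<z" "z<b"
    and fa: "f a < g a" and gb: "g b < f b" and fz: "f z = L z" and gz: "g z = L z"
    and e: "\<epsilon>>0" and hy: "\<And>t. t\<in>J \<Longrightarrow> \<bar>t - z\<bar> < \<epsilon> \<Longrightarrow> y t = L t"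
  shows False
proof -
  define r where "r = min \<epsilon> (min (z-a) (b-z))"
  have r: "r > 0" unfolding r_def using e ab by simp
  have inJ: "t \<in> J" if "\<bar>t - z\<bar> < r" for t
    using Jint[OF ab(1,2), of t] that unfolding r_def by (auto simp: abs_less_iff)
  have zJ: "z \<in> J" using inJ r by simp
  have yz: "y z = L z" using hy[OF zJ] e by simp
  have tan: "2*(qa h - qa y)*z + (qb h - qb y) = 0" if h: "h\<in>F" "h z = L z" for h
  proof (rule quad_tangent[OF r])
    fix t assume t: "\<bar>t - z\<bar> < r"
    have tJ: "t \<in> J" using inJ[OF t] .
    have "y t = L t" using hy[OF tJ] t unfolding r_def by simp
    hence "y t \<le> h t" using L_le[OF h(1)] by simp
    hence "q y t \<le> q h t" using le_iff[OF y h(1) tJ] by simp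
    then show "(qa h - qa y) * t\<^sup>2 + (qb h - qb y) * t + (qc h - qc y) \<ge> 0"
      unfolding q_def by (simp add: algebra_simps)
  next
    have "y z = h z" using yz h(2) by simp
    hence "q y z = q h z" using eq_iff[OF y h(1) zJ] by simp
    then show "(qa h - qa y) * z\<^sup>2 + (qb h - qb y) * z + (qc h - qc y) = 0"
      unfolding q_def by (simp add: algebra_simps)
  qed
  define A where "A = qa f - qa g"
  define B where "B = qb f - qb g"
  define C where "C = qc f - qc g"
  have B: "B = - 2*A*z" using tan[OF f fz] tan[OF g gz] unfolding A_def B_def by (simp add: algebra_simps)
  have "q f z = q g z" using eq_iff[OF f g zJ] fz gz by simp
  hence Cz: "A*z\<^sup>2 + B*z + C = 0" unfolding q_def A_def B_def C_def by (simp add: algebra_simps)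
  have P: "q f t - q g t = A * (t - z)\<^sup>2" for t
  proof -
    have "q f t - q g t = A*t\<^sup>2 + B*t + C" unfolding q_def A_def B_def C_def by (simp add: algebra_simps)
    also have "\<dots> = A * (t - z)\<^sup>2" using Cz B by (simp add: power2_eq_square algebra_simps)
    finally show ?thesis .
  qed
  have "q f a < q g a" using less_iff[OF f g ab(1)] fa by simp
  hence "A * (a - z)\<^sup>2 < 0" using P[of a] by simp
  hence An: "A < 0" using zero_le_power2[of "a-z"] by (metis mult_nonneg_nonneg not_le)
  have "q g b < q f b" using less_iff[OF g f ab(2)] gb by simp
  hence "A * (b - z)\<^sup>2 > 0" using P[of b] by simp
  hence "A > 0" using zero_le_power2[of "b-z"] by (metis mult_nonpos_nonneg not_le less_eq_real_def)
  then show False using An by simp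
qed

end

context envs begin

lemma sepT: "\<exists>\<epsilon>>0. \<forall>t\<in>T. t \<noteq> z \<longrightarrow> \<epsilon> \<le> \<bar>t - z\<bar>"
proof -
  define D where "D = (\<lambda>t. \<bar>t - z\<bar>) ` {t\<in>T. t \<noteq> z} \<union> {1}"
  have finD: "finite D" unfolding D_def using finT by simp
  have neD: "D \<noteq> {}" unfolding D_def by simp
  have pos: "\<forall>d\<in>D. d > 0" unfolding D_def by auto
  have "Min D > 0" using Min_in[OF finD neD] pos by auto
  moreover have "\<forall>t\<in>T. t \<noteq> z \<longrightarrow> Min D \<le> \<bar>t - z\<bar>" using Min_le[OF finD] unfolding D_def by auto
  ultimately show ?thesis by blast
qed

definition BP where "BP = {z\<in>J. (\<exists>a\<in>J. \<exists>b\<in>J. a<z \<and> z<b) \<and> \<not>(\<exists>y\<in>F. \<exists>\<epsilon>>0. \<forall>t\<in>J. \<bar>t - z\<bar> < \<epsilon> \<longrightarrow> y t = L t)}"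

lemma loc_single:
  assumes y: "y \<in> F" and ab: "a < z" "z < b" and h: "\<And>t. a \<le> t \<Longrightarrow> t \<le> b \<Longrightarrow> y t = L t"
  shows "z \<notin> BP"
proof
  assume "z \<in> BP"
  hence n: "\<not>(\<exists>y\<in>F. \<exists>\<epsilon>>0. \<forall>t\<in>J. \<bar>t - z\<bar> < \<epsilon> \<longrightarrow> y t = L t)" unfolding BP_def by blast
  have "\<exists>\<epsilon>>0. \<forall>t\<in>J. \<bar>t - z\<bar> < \<epsilon> \<longrightarrow> y t = L t"
    by (rule exI[of _ "min (z-a) (b-z)"]) (use ab h in \<open>auto simp: abs_less_iff\<close>)
  then show False using n y by blast
qed

lemma BP_T: "BP \<subseteq> T"
proof
  fix z assume z: "z \<in> BP"
  then obtain a b where ab: "a\<in>J" "b\<in>J" "a<z" "z<b" and zJ: "z \<in> J" unfolding BP_def by blast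
  show "z \<in> T"
  proof (rule ccontr)
    assume zT: "z \<notin> T"
    obtain \<epsilon> where e: "\<epsilon>>0" "\<forall>t\<in>T. t \<noteq> z \<longrightarrow> \<epsilon> \<le> \<bar>t - z\<bar>" using sepT by blast
    define lo where "lo = max a (z - \<epsilon>/2)"
    define hi where "hi = min b (z + \<epsilon>/2)"
    have lh: "lo < z" "z < hi" "lo \<in> J" "hi \<in> J" unfolding lo_def hi_def using ab e(1) Jint[OF ab(1,2)] by auto
    have nT: "t \<notin> T" if "lo < t" "t < hi" for t
    proof
      assume tT: "t \<in> T"
      have "\<bar>t - z\<bar> < \<epsilon>" using that unfolding lo_def hi_def by (auto simp: abs_less_iff)
      moreover have "t \<noteq> z" using tT zT by auto
      ultimately show False using e(2) tT by force
    qed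
    obtain y where y: "y \<in> F" "\<forall>t. lo \<le> t \<and> t \<le> hi \<longrightarrow> y t = L t"
      using LCC[OF lh(3,4) _ nT] lh by force
    have "z \<notin> BP" by (rule loc_single[OF y(1) lh(1,2)]) (use y in auto)
    then show False using z by simp
  qed
qed

lemma finBP: "finite BP" using finite_subset[OF BP_T finT] .

definition M where "M = lab ` U"

lemma finM: "finite M" unfolding M_def
proof -
  have "lab ` U \<subseteq> F" using lab(1) by auto
  then show "finite (lab ` U)" using finF finite_subset by blast
qed

lemma right_free:
  assumes "z \<in> J" "b \<in> J" "z < b"
  shows "\<exists>v. v \<in> U \<and> z < v \<and> (\<forall>t. z < t \<and> t \<le> v \<longrightarrow> t \<notin> T)"
proof -
  obtain \<epsilon> where e: "\<epsilon>>0" "\<forall>t\<in>T. t \<noteq> z \<longrightarrow> \<epsilon> \<le> \<bar>t - z\<bar>" using sepT by blast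
  define w where "w = min b (z + \<epsilon>/2)"
  have w: "z < w" "w \<le> b" "w \<le> z + \<epsilon>/2" unfolding w_def using assms e(1) by auto
  have nT: "t \<notin> T" if "z < t" "t \<le> w" for t
  proof
    assume tT: "t \<in> T"
    have "\<bar>t - z\<bar> < \<epsilon>" using that w e(1) by (auto simp: abs_less_iff)
    then show False using e(2) tT that(1) by force
  qed
  have "w \<in> J" using Jint[OF assms(1,2)] w by simp
  hence "w \<in> U" using nT[of w] w unfolding U_def by simp
  then show ?thesis using w nT by blast
qed

lemma left_free:
  assumes "z \<in> J" "a \<in> J" "a < z"
  shows "\<exists>v. v \<in> U \<and> a < v \<and> v < z \<and> (\<forall>t. v \<le> t \<and> t < z \<longrightarrow> t \<notin> T)"
proof -
  obtain \<epsilon> where e: "\<epsilon>>0" "\<forall>t\<in>T. t \<noteq> z \<longrightarrow> \<epsilon> \<le> \<bar>t - z\<bar>" using sepT by blast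
  define w where "w = max ((a+z)/2) (z - \<epsilon>/2)"
  have m1: "a < (a+z)/2" "(a+z)/2 < z" using assms by auto
  have w: "w < z" "a < w" "z - \<epsilon>/2 \<le> w" unfolding w_def using m1 e(1) by (auto simp: max_def)
  have nT: "t \<notin> T" if "w \<le> t" "t < z" for t
  proof
    assume tT: "t \<in> T"
    have "\<bar>t - z\<bar> < \<epsilon>" using that w e(1) by (auto simp: abs_less_iff)
    then show False using e(2) tT that(2) by force
  qed
  have "w \<in> J" using Jint[OF assms(2,1)] w by simp
  hence "w \<in> U" using nT[of w] w unfolding U_def by simp
  then show ?thesis using w nT by blast
qed

lemma card_BP: "card BP \<le> 4 * card M + 1"
proof -
  define v where "v z = (SOME v. v \<in> U \<and> z < v \<and> (\<forall>t. z < t \<and> t \<le> v \<longrightarrow> t \<notin> T))" for z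
  have v: "v z \<in> U \<and> z < v z \<and> (\<forall>t. z < t \<and> t \<le> v z \<longrightarrow> t \<notin> T)" if zB: "z \<in> BP" for z
  proof -
    obtain b where b: "b \<in> J" "z < b" "z \<in> J" using zB unfolding BP_def by blast
    have "\<exists>v. v \<in> U \<and> z < v \<and> (\<forall>t. z < t \<and> t \<le> v \<longrightarrow> t \<notin> T)" using right_free[OF b(3,1,2)] .
    then show ?thesis unfolding v_def by (rule someI_ex)
  qed
  have mono: "v z1 < z2" if "z1 \<in> BP" "z2 \<in> BP" "z1 < z2" for z1 z2
  proof (rule ccontr)
    assume "\<not> v z1 < z2"
    hence "z2 \<notin> T" using v[OF that(1)] that(3) by simp
    then show False using BP_T that(2) by blast
  qed
  have inj: "inj_on v BP"
  proof (rule inj_onI)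
    fix z1 z2 assume a: "z1 \<in> BP" "z2 \<in> BP" "v z1 = v z2"
    show "z1 = z2"
    proof (rule ccontr)
      assume "z1 \<noteq> z2"
      then consider "z1 < z2" | "z2 < z1" by linarith
      then show False
      proof cases
        case 1 then show False using mono[OF a(1,2) 1] v[OF a(2)] a(3) by simp
      next
        case 2 then show False using mono[OF a(2,1) 2] v[OF a(1)] a(3) by simp
      qed
    qed
  qed
  have "card (v ` BP) \<le> 4 * card (lab ` U) + 1"
  proof (rule count_lemma)
    show "finite (v ` BP)" using finBP by simp
    show "v ` BP \<subseteq> U" using v by auto
    show "finite (lab ` U)" using finM unfolding M_def .
    show "\<And>p1 p2 p3 p4. p1\<in>U \<Longrightarrow> p2\<in>U \<Longrightarrow> p3\<in>U \<Longrightarrow> p4\<in>U \<Longrightarrow> p1<p2 \<Longrightarrow> p2<p3 \<Longrightarrow> p3<p4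
      \<Longrightarrow> lab p1 = lab p3 \<Longrightarrow> lab p2 = lab p4 \<Longrightarrow> lab p1 = lab p2" using abab_lab by blast
    fix p p' assume pp: "p \<in> v ` BP" "p' \<in> v ` BP" "p < p'" "lab p = lab p'"
    obtain z1 z2 where zz: "z1 \<in> BP" "z2 \<in> BP" "p = v z1" "p' = v z2" using pp(1,2) by auto
    have z12: "z1 < z2"
    proof (rule ccontr)
      assume "\<not> z1 < z2"
      then consider "z1 = z2" | "z2 < z1" by linarith
      then show False
      proof cases
        case 1 then show False using zz pp(3) by simp
      next
        case 2 then show False using mono[OF zz(2,1) 2] v[OF zz(1)] zz pp(3) by simp
      qed
    qed
    have pz: "p < z2" using mono[OF zz(1,2) z12] zz(3) by simp
    have z2J: "z2 \<in> J" using zz(2) unfolding BP_def by simp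
    have pU: "p \<in> U" and p'U: "p' \<in> U" using v zz by auto
    have pJ: "p \<in> J" and p'J: "p' \<in> J" using pU p'U UJ by auto
    obtain s where s: "s \<in> U" "p < s" "s < z2" "\<forall>t. s \<le> t \<and> t < z2 \<longrightarrow> t \<notin> T"
      using left_free[OF z2J pJ pz] by blast
    show "\<exists>s\<in>U. p < s \<and> s < p' \<and> lab s \<noteq> lab p"
    proof (intro bexI[of _ s] conjI)
      show "s \<in> U" "p < s" using s by auto
      show "s < p'" using s v[OF zz(2)] zz(4) by simp
      show "lab s \<noteq> lab p"
      proof
        assume eq: "lab s = lab p"
        have sJ: "s \<in> J" using s(1) UJ by simp
        obtain y1 where y1: "y1 \<in> F" "\<forall>t. s \<le> t \<and> t \<le> z2 \<longrightarrow> y1 t = L t"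
          using LCC[OF sJ z2J s(3)] s(4) by force
        obtain y2 where y2: "y2 \<in> F" "\<forall>t. z2 \<le> t \<and> t \<le> p' \<longrightarrow> y2 t = L t"
          using LCC[OF z2J p'J] v[OF zz(2)] zz(4) by force
        have "y1 = lab s" using lab(4)[OF s(1) y1(1)] y1(2) s(3) by simp
        moreover have "y2 = lab p'" using lab(4)[OF p'U y2(1)] y2(2) v[OF zz(2)] zz(4) by simp
        ultimately have y12: "y1 = y2" using eq pp(4) by simp
        have "z2 \<notin> BP"
        proof (rule loc_single[OF y1(1), of s z2 p'])
          show "s < z2" using s by simp
          show "z2 < p'" using v[OF zz(2)] zz(4) by simp
          fix t assume "s \<le> t" "t \<le> p'"
          then show "y1 t = L t" using y1(2) y2(2) y12 by (cases "t \<le> z2") auto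
        qed
        then show False using zz(2) by simp
      qed
    qed
  qed
  then show ?thesis using card_image[OF inj] unfolding M_def by simp
qed

end

context envs begin

definition Pcs where "Pcs = {I. env_piece J F I \<and> (\<forall>I'. env_piece J F I' \<and> I \<subseteq> I' \<longrightarrow> I' = I)}"

lemma envp: "env_piece J F I \<longleftrightarrow> I \<noteq> {} \<and> I \<subseteq> J \<and> is_interval I \<and> (\<exists>f\<in>F. \<forall>t\<in>I. f t = L t)"
  by (simp add: env_piece_def L_def)

lemma piece_fun: "env_piece J F I \<Longrightarrow> p \<in> I \<Longrightarrow> p \<in> U \<Longrightarrow> \<forall>t\<in>I. lab p t = L t"
proof -
  assume a: "env_piece J F I" "p \<in> I" "p \<in> U"
  then obtain f where f: "f \<in> F" "\<forall>t\<in>I. f t = L t" unfolding envp by blast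
  have "f = lab p" using lab(4)[OF a(3) f(1)] f(2) a(2) by simp
  then show ?thesis using f by simp
qed

lemma merge:
  assumes I: "I \<in> Pcs" and I': "I' \<in> Pcs" and p: "p \<in> I" "p \<in> U" and p': "p' \<in> I'" "p' \<in> U"
    and pp: "p \<le> p'" and ll: "lab p = lab p'" and h: "\<And>t. p \<le> t \<Longrightarrow> t \<le> p' \<Longrightarrow> lab p t = L t"
  shows "I = I'"
proof -
  define W where "W = I \<union> {p..p'} \<union> I'"
  have eI: "env_piece J F I" and eI': "env_piece J F I'" using I I' unfolding Pcs_def by auto
  have cI: "connected I" using eI unfolding envp is_interval_connected_1 by simp
  have cI': "connected I'" using eI' unfolding envp is_interval_connected_1 by simp
  have c1: "connected (I \<union> {p..p'})" by (rule connected_Un[OF cI connected_Icc]) (use p pp in auto)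
  have c2: "connected W" unfolding W_def by (rule connected_Un[OF c1 cI']) (use p' pp in auto)
  have pJ: "p \<in> J" "p' \<in> J" using p p' UJ by auto
  have WJ: "W \<subseteq> J" unfolding W_def using eI eI' Jint[OF pJ] unfolding envp by auto
  have fF: "lab p \<in> F" using lab(1)[OF p(2)] .
  have onW: "\<forall>t\<in>W. lab p t = L t"
    unfolding W_def using piece_fun[OF eI p] piece_fun[OF eI' p'] ll h by auto
  have eW: "env_piece J F W" unfolding envp
    using WJ c2 onW fF p unfolding is_interval_connected_1 W_def by blast
  have "W = I" using I eW unfolding Pcs_def W_def by blast
  moreover have "W = I'" using I' eW unfolding Pcs_def W_def by blast
  ultimately show ?thesis by simp
qed

lemma nondeg:
  assumes I: "I \<in> Pcs" and q: "q1 \<in> J" "q2 \<in> J" "q1 \<noteq> q2"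
  shows "\<exists>a b. a\<in>I \<and> b\<in>I \<and> a<b"
proof (rule ccontr)
  assume n: "\<not> (\<exists>a b. a\<in>I \<and> b\<in>I \<and> a<b)"
  have eI: "env_piece J F I" using I unfolding Pcs_def by auto
  obtain p where pI: "p \<in> I" using eI unfolding envp by blast
  have Ip: "I = {p}" using n pI by (metis linorder_neqE_linordered_idom singletonI subsetI subset_singletonD empty_iff)
  have pJ: "p \<in> J" using eI pI unfolding envp by auto
  obtain q where qq: "q \<in> J" "q \<noteq> p" using q by metis
  have big: False if v: "v \<noteq> p" "v \<in> J" and y: "y \<in> F" "\<forall>t. min p v \<le> t \<and> t \<le> max p v \<longrightarrow> y t = L t" for v y
  proof -
    define W where "W = {min p v..max p v}"
    have "env_piece J F W" unfolding envp W_def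
    proof (intro conjI)
      show "{min p v..max p v} \<noteq> {}" by simp
      show "{min p v..max p v} \<subseteq> J" using Jint[of "min p v" "max p v"] pJ v(2) by (auto simp: min_def max_def)
      show "is_interval {min p v..max p v}" by (simp add: is_interval_cc)
      show "\<exists>f\<in>F. \<forall>t\<in>{min p v..max p v}. f t = L t"
        by (rule bexI[of _ y]) (use y in auto)
    qed
    moreover have "I \<subseteq> W" unfolding Ip W_def by simp
    ultimately have "W = I" using I unfolding Pcs_def by blast
    moreover have "v \<in> W" unfolding W_def by simp
    ultimately show False using Ip v(1) by simp
  qed
  consider "p < q" | "q < p" using qq by linarith
  then show False
  proof cases
    case 1
    obtain v where v: "v \<in> U" "p < v" "\<forall>t. p < t \<and> t \<le> v \<longrightarrow> t \<notin> T" using right_free[OF pJ qq(1) 1] by blast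
    have vJ: "v \<in> J" using v UJ by simp
    obtain y where y: "y \<in> F" "\<forall>t. p \<le> t \<and> t \<le> v \<longrightarrow> y t = L t" using LCC[OF pJ vJ v(2)] v(3) by force
    show False using big[of v y] v(2) vJ y by (simp add: min_def max_def)
  next
    case 2
    obtain v where v: "v \<in> U" "q < v" "v < p" "\<forall>t. v \<le> t \<and> t < p \<longrightarrow> t \<notin> T" using left_free[OF pJ qq(1) 2] by blast
    have vJ: "v \<in> J" using v UJ by simp
    obtain y where y: "y \<in> F" "\<forall>t. v \<le> t \<and> t \<le> p \<longrightarrow> y t = L t" using LCC[OF vJ pJ v(3)] v(4) by force
    show False using big[of v y] v(3) vJ y by (simp add: min_def max_def)
  qed
qed

lemma card_Pcs:
  assumes q: "q1 \<in> J" "q2 \<in> J" "q1 \<noteq> q2"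
  shows "card Pcs \<le> 4 * card M + 1"
proof (cases "finite Pcs")
  case False then show ?thesis by simp
next
  case finP: True
  define tI where "tI I = (SOME t. t \<in> I \<and> t \<in> U)" for I
  have tI: "tI I \<in> I \<and> tI I \<in> U" if I: "I \<in> Pcs" for I
  proof -
    obtain a b where ab: "a\<in>I" "b\<in>I" "a<b" using nondeg[OF I q] by blast
    obtain t where t: "a<t" "t<b" "t \<notin> T" using nonT[OF ab(3)] by blast
    have eI: "env_piece J F I" using I unfolding Pcs_def by auto
    have "t \<in> I" using eI ab t unfolding envp is_interval_1 by (meson less_imp_le)
    moreover have "t \<in> J" using eI calculation unfolding envp by auto
    ultimately have "\<exists>t. t \<in> I \<and> t \<in> U" using t(3) unfolding U_def by blast
    then show ?thesis unfolding tI_def by (rule someI_ex)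
  qed
  have inj: "inj_on tI Pcs"
  proof (rule inj_onI)
    fix I I' assume a: "I \<in> Pcs" "I' \<in> Pcs" "tI I = tI I'"
    show "I = I'"
      by (rule merge[OF a(1,2), of "tI I" "tI I"]) (use tI[OF a(1)] tI[OF a(2)] a(3) lab(2) in auto)
  qed
  have "card (tI ` Pcs) \<le> 4 * card (lab ` U) + 1"
  proof (rule count_lemma)
    show "finite (tI ` Pcs)" using finP by simp
    show "tI ` Pcs \<subseteq> U" using tI by auto
    show "finite (lab ` U)" using finM unfolding M_def .
    show "\<And>p1 p2 p3 p4. p1\<in>U \<Longrightarrow> p2\<in>U \<Longrightarrow> p3\<in>U \<Longrightarrow> p4\<in>U \<Longrightarrow> p1<p2 \<Longrightarrow> p2<p3 \<Longrightarrow> p3<p4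
      \<Longrightarrow> lab p1 = lab p3 \<Longrightarrow> lab p2 = lab p4 \<Longrightarrow> lab p1 = lab p2" using abab_lab by blast
    fix p p' assume pp: "p \<in> tI ` Pcs" "p' \<in> tI ` Pcs" "p < p'" "lab p = lab p'"
    obtain I I' where II: "I \<in> Pcs" "I' \<in> Pcs" "p = tI I" "p' = tI I'" using pp(1,2) by auto
    have pU: "p \<in> U" "p \<in> I" and p'U: "p' \<in> U" "p' \<in> I'" using tI II by auto
    have neq: "I \<noteq> I'" using II pp(3) by auto
    define f where "f = lab p"
    have fF: "f \<in> F" unfolding f_def using lab(1)[OF pU(1)] .
    obtain t where t: "p \<le> t" "t \<le> p'" "f t \<noteq> L t"
      using merge[OF II(1,2) pU(2,1) p'U(2,1) _ pp(4)] pp(3) neq unfolding f_def by force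
    have pJ: "p \<in> J" "p' \<in> J" using pU p'U UJ by auto
    have tJ: "t \<in> J" using Jint[OF pJ] t by simp
    have tp: "t \<noteq> p" using t(3) lab(2)[OF pU(1)] unfolding f_def by auto
    have tp': "t \<noteq> p'" using t(3) lab(2)[OF p'U(1)] pp(4) unfolding f_def by auto
    obtain g where g: "g \<in> F" "g t = L t" using L_ex by blast
    have fg: "f t > g t" using t(3) L_le[OF fF, of t] g by simp
    obtain \<delta> where \<delta>: "\<delta> > 0" "\<forall>x\<in>J. \<bar>x - t\<bar> < \<delta> \<longrightarrow> f x > g x"
    proof -
      have "\<exists>\<delta>>0. \<forall>x\<in>J. \<bar>x - t\<bar> < \<delta> \<longrightarrow> f x > g x"
      proof (rule ccontr)
        assume "\<not> (\<exists>\<delta>>0. \<forall>x\<in>J. \<bar>x - t\<bar> < \<delta> \<longrightarrow> f x > g x)"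
        hence "\<And>\<delta>. \<delta>>0 \<Longrightarrow> \<exists>x\<in>J. \<bar>x - t\<bar> < \<delta> \<and> f x \<le> g x" by (meson not_less)
        hence "f t \<le> g t" using lim_le[OF fF g(1) tJ] by blast
        then show False using fg by simp
      qed
      then show ?thesis using that by blast
    qed
    define lo where "lo = max p (t - \<delta>)"
    define hi where "hi = min p' (t + \<delta>)"
    have lohi: "lo < hi" unfolding lo_def hi_def using t tp tp' \<delta>(1) by auto
    obtain s where s: "lo < s" "s < hi" "s \<notin> T" using nonT[OF lohi] by blast
    have sp: "p < s" "s < p'" using s unfolding lo_def hi_def by auto
    have sJ: "s \<in> J" using Jint[OF pJ] sp by simp
    have sU: "s \<in> U" using sJ s(3) unfolding U_def by simp
    have "\<bar>s - t\<bar> < \<delta>" using s unfolding lo_def hi_def by (auto simp: abs_less_iff)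
    hence fgs: "f s > g s" using \<delta>(2) sJ by blast
    have "lab s \<noteq> f"
    proof
      assume "lab s = f"
      hence "f s = L s" using lab(2)[OF sU] by simp
      then show False using fgs L_le[OF g(1), of s] by simp
    qed
    then show "\<exists>s\<in>U. p < s \<and> s < p' \<and> lab s \<noteq> lab p" using sU sp unfolding f_def by blast
  qed
  then show ?thesis using card_image[OF inj] unfolding M_def by simp
qed

end

lemma arith_lr:
  fixes l r :: nat
  shows "l * r \<le> (l - 1) * (l - 2) + (r - 1) * (r - 2) + 5"
proof (cases "l = 0 \<or> r = 0")
  case True then show ?thesis by auto
next
  case False
  hence l1: "l \<ge> 1" and r1: "r \<ge> 1" by auto
  have el: "real ((l - 1) * (l - 2)) = (real l - 1) * (real l - 2)"
  proof (cases "l = 1")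
    case True then show ?thesis by simp
  next
    case False then have "l \<ge> 2" using l1 by simp
    then show ?thesis by (simp add: of_nat_diff)
  qed
  have er: "real ((r - 1) * (r - 2)) = (real r - 1) * (real r - 2)"
  proof (cases "r = 1")
    case True then show ?thesis by simp
  next
    case False then have "r \<ge> 2" using r1 by simp
    then show ?thesis by (simp add: of_nat_diff)
  qed
  have "real l * real r \<le> (real l - 1) * (real l - 2) + (real r - 1) * (real r - 2) + 5"
  proof -
    have "0 \<le> ((real l - real r)\<^sup>2 + (real l - 3)\<^sup>2 + (real r - 3)\<^sup>2) / 2" by simp
    moreover have "((real l - real r)\<^sup>2 + (real l - 3)\<^sup>2 + (real r - 3)\<^sup>2) / 2
        = (real l - 1) * (real l - 2) + (real r - 1) * (real r - 2) + 5 - real l * real r"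
      by (simp add: power2_eq_square field_simps)
    ultimately show ?thesis by linarith
  qed
  hence "real (l * r) \<le> real ((l - 1) * (l - 2) + (r - 1) * (r - 2) + 5)" using el er by simp
  then show ?thesis by (simp only: of_nat_le_iff)
qed

context envs begin

definition \<tau> where "\<tau> f = (SOME t. t \<in> U \<and> lab t = f)"

lemma tau: "f \<in> M \<Longrightarrow> \<tau> f \<in> U \<and> lab (\<tau> f) = f"
  unfolding \<tau>_def M_def by (rule someI_ex) auto

lemma MF: "f \<in> M \<Longrightarrow> f \<in> F" unfolding M_def using lab(1) by auto

lemma tauJ: "f \<in> M \<Longrightarrow> \<tau> f \<in> J" using tau UJ by blast

lemma tau_inj: "inj_on \<tau> M"
  by (rule inj_onI) (metis tau)

lemma tau_L: "f \<in> M \<Longrightarrow> f (\<tau> f) = L (\<tau> f)" using tau lab(2) by metis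

lemma tau_strict: "f \<in> M \<Longrightarrow> g \<in> F \<Longrightarrow> g \<noteq> f \<Longrightarrow> f (\<tau> f) < g (\<tau> f)"
  using tau lab(3) by metis

lemma tau_only: "f \<in> M \<Longrightarrow> g \<in> F \<Longrightarrow> g (\<tau> f) = L (\<tau> f) \<Longrightarrow> g = f"
  using tau lab(4) by metis

lemma cross:
  assumes f: "f \<in> M" and g: "g \<in> M" and fg: "\<tau> f < \<tau> g"
  shows "\<exists>z. \<tau> f < z \<and> z < \<tau> g \<and> f z = g z"
proof -
  have ne: "f \<noteq> g" using fg by auto
  have "f (\<tau> f) < g (\<tau> f)" using tau_strict[OF f MF[OF g]] ne by simp
  moreover have "g (\<tau> g) < f (\<tau> g)" using tau_strict[OF g MF[OF f]] ne by simp
  ultimately show ?thesis using IVT1[OF MF[OF f] MF[OF g] tauJ[OF f] tauJ[OF g]] fg by simp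
qed

lemma straddle_good:
  assumes f: "f \<in> M" and g: "g \<in> M" and h: "h \<in> M" and o: "\<tau> f < \<tau> h" "\<tau> h < \<tau> g"
    and s: "s \<in> J" "s < \<tau> f \<or> \<tau> g < s" and fs: "f s = L s" and gs: "g s = L s" and hs: "h s = L s"
  shows "\<exists>t\<in>J. f t = g t \<and> L t < f t"
proof -
  have fF: "f \<in> F" and gF: "g \<in> F" and hF: "h \<in> F" using MF f g h by auto
  have fg: "f \<noteq> g" and fh: "f \<noteq> h" and gh: "g \<noteq> h" using o by auto
  obtain z where z: "\<tau> f < z" "z < \<tau> g" "f z = g z" using cross[OF f g] o by force
  have J3: "\<tau> f \<in> J" "\<tau> g \<in> J" "\<tau> h \<in> J" using tauJ f g h by auto
  have zJ: "z \<in> J" using Jint[OF J3(1,2)] z by simp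
  show ?thesis
  proof (cases "L z < f z")
    case True then show ?thesis using zJ z by blast
  next
    case False
    hence fz: "f z = L z" using L_le[OF fF, of z] by simp
    hence gz: "g z = L z" using z by simp
    have zh: "z \<noteq> \<tau> h" using tau_only[OF h fF] fz fh by auto
    consider "z < \<tau> h" | "\<tau> h < z" using zh by linarith
    then show ?thesis
    proof cases
      case 1
      have a1: "g z \<le> h z" using gz L_le[OF hF] by simp
      have a2: "h (\<tau> h) < g (\<tau> h)" using tau_strict[OF h gF] gh by simp
      obtain z1 where z1: "z \<le> z1" "z1 \<le> \<tau> h" "g z1 = h z1"
        using IVT0[OF gF hF zJ J3(3)] 1 a1 a2 by force
      have z1h: "z1 < \<tau> h" using z1 a2 by (cases "z1 = \<tau> h") auto
      have a3: "h (\<tau> g) > g (\<tau> g)" using tau_strict[OF g hF] gh by simp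
      obtain z2 where z2: "\<tau> h < z2" "z2 < \<tau> g" "h z2 = g z2"
        using IVT1[OF hF gF J3(3) J3(2)] o a2 a3 by force
      have "z1 \<in> J" "z2 \<in> J" using Jint[OF J3(1,2)] z1 z1h z2 z o by auto
      moreover have "g s = h s" using gs hs by simp
      ultimately show ?thesis using Z3[OF gF hF gh, of z1 z2 s] z1 z1h z2 s z o by force
    next
      case 2
      have a1: "f (\<tau> f) < h (\<tau> f)" using tau_strict[OF f hF] fh by simp
      have a2: "h (\<tau> h) < f (\<tau> h)" using tau_strict[OF h fF] fh by simp
      obtain z1 where z1: "\<tau> f < z1" "z1 < \<tau> h" "f z1 = h z1"
        using IVT1[OF fF hF J3(1) J3(3)] o a1 a2 by force
      have a3: "f z \<le> h z" using fz L_le[OF hF] by simp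
      obtain z2 where z2: "\<tau> h \<le> z2" "z2 \<le> z" "h z2 = f z2"
        using IVT0[OF hF fF J3(3) zJ] 2 a2 a3 by force
      have z2h: "\<tau> h < z2" using z2 a2 by (cases "z2 = \<tau> h") auto
      have "z1 \<in> J" "z2 \<in> J" using Jint[OF J3(1,2)] z1 z2 z2h z o by auto
      moreover have "f s = h s" using fs hs by simp
      ultimately show ?thesis using Z3[OF fF hF fh, of z1 z2 s] z1 z2 z2h s z o by force
    qed
  qed
qed

definition Left where "Left s = {f\<in>M. \<tau> f < s \<and> f s = L s}"
definition Right where "Right s = {f\<in>M. s < \<tau> f \<and> f s = L s}"
definition P2 where "P2 = {(f,g) \<in> M\<times>M. \<tau> f < \<tau> g}"
definition Good where "Good = {(f,g) \<in> P2. \<exists>t\<in>J. f t = g t \<and> L t < f t}"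
definition SSL where "SSL s = {(f,g) \<in> Left s \<times> Left s. \<tau> f < \<tau> g \<and> (\<exists>h\<in>Left s. \<tau> f < \<tau> h \<and> \<tau> h < \<tau> g)}"
definition SSR where "SSR s = {(f,g) \<in> Right s \<times> Right s. \<tau> f < \<tau> g \<and> (\<exists>h\<in>Right s. \<tau> f < \<tau> h \<and> \<tau> h < \<tau> g)}"
definition SS where "SS s = SSL s \<union> SSR s"

lemma SS_good: "s \<in> J \<Longrightarrow> SS s \<subseteq> Good"
proof
  fix p assume sJ: "s \<in> J" and p: "p \<in> SS s"
  then obtain f g where fg: "p = (f,g)" by (cases p) auto
  from p consider "p \<in> SSL s" | "p \<in> SSR s" unfolding SS_def by blast
  then show "p \<in> Good"
  proof cases
    case 1
    then obtain h where h: "f \<in> Left s" "g \<in> Left s" "h \<in> Left s" "\<tau> f < \<tau> g" "\<tau> f < \<tau> h" "\<tau> h < \<tau> g"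
      unfolding SSL_def fg by blast
    have "\<exists>t\<in>J. f t = g t \<and> L t < f t"
      by (rule straddle_good[of f g h s]) (use h sJ in \<open>auto simp: Left_def\<close>)
    then show ?thesis using h unfolding Good_def P2_def fg Left_def by auto
  next
    case 2
    then obtain h where h: "f \<in> Right s" "g \<in> Right s" "h \<in> Right s" "\<tau> f < \<tau> g" "\<tau> f < \<tau> h" "\<tau> h < \<tau> g"
      unfolding SSR_def fg by blast
    have "\<exists>t\<in>J. f t = g t \<and> L t < f t"
      by (rule straddle_good[of f g h s]) (use h sJ in \<open>auto simp: Right_def\<close>)
    then show ?thesis using h unfolding Good_def P2_def fg Right_def by auto
  qed
qed

lemma SS_side: "(f,g) \<in> SS s \<Longrightarrow> f \<in> M \<and> g \<in> M \<and> \<tau> f < \<tau> g \<and> f s = L s \<and> g s = L s \<and> (s < \<tau> f \<or> \<tau> g < s)"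
  unfolding SS_def SSL_def SSR_def Left_def Right_def by auto

lemma SS_disj:
  assumes s: "s \<in> J" "s' \<in> J" "s \<noteq> s'"
  shows "SS s \<inter> SS s' = {}"
proof (rule ccontr)
  assume "SS s \<inter> SS s' \<noteq> {}"
  then obtain f g where p: "(f,g) \<in> SS s" "(f,g) \<in> SS s'" by auto
  note a = SS_side[OF p(1)] and b = SS_side[OF p(2)]
  have fF: "f \<in> F" and gF: "g \<in> F" using a MF by auto
  have fg: "f \<noteq> g" using a by auto
  obtain z where z: "\<tau> f < z" "z < \<tau> g" "f z = g z" using cross[of f g] a by blast
  have zJ: "z \<in> J" using Jint[OF tauJ tauJ, of f g] a z by auto
  have "z \<noteq> s" "z \<noteq> s'" using a b z by auto
  then show False using Z3[OF fF gF fg, of z s s'] zJ s z a b by auto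
qed

lemma bad_BP: "P2 - Good \<subseteq> (\<Union>s\<in>BP. Left s \<times> Right s)"
proof
  fix p assume p: "p \<in> P2 - Good"
  then obtain f g where fg: "p = (f,g)" "f \<in> M" "g \<in> M" "\<tau> f < \<tau> g" unfolding P2_def by auto
  have fF: "f \<in> F" and gF: "g \<in> F" using fg MF by auto
  have ne: "f \<noteq> g" using fg by auto
  obtain z where z: "\<tau> f < z" "z < \<tau> g" "f z = g z" using cross[OF fg(2,3,4)] by blast
  have J2: "\<tau> f \<in> J" "\<tau> g \<in> J" using tauJ fg by auto
  have zJ: "z \<in> J" using Jint[OF J2] z by simp
  have "\<not> L z < f z" using p fg z zJ unfolding Good_def by auto
  hence fz: "f z = L z" using L_le[OF fF, of z] by simp
  hence gz: "g z = L z" using z by simp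
  have fa: "f (\<tau> f) < g (\<tau> f)" using tau_strict[OF fg(2) gF] ne by simp
  have gb: "g (\<tau> g) < f (\<tau> g)" using tau_strict[OF fg(3) fF] ne by simp
  have "z \<in> BP" unfolding BP_def
  proof (intro CollectI conjI)
    show "z \<in> J" using zJ .
    show "\<exists>a\<in>J. \<exists>b\<in>J. a < z \<and> z < b" using J2 z by blast
    show "\<not> (\<exists>y\<in>F. \<exists>\<epsilon>>0. \<forall>t\<in>J. \<bar>t - z\<bar> < \<epsilon> \<longrightarrow> y t = L t)"
    proof
      assume "\<exists>y\<in>F. \<exists>\<epsilon>>0. \<forall>t\<in>J. \<bar>t - z\<bar> < \<epsilon> \<longrightarrow> y t = L t"
      then obtain y \<epsilon> where y: "y \<in> F" "\<epsilon> > 0" "\<forall>t\<in>J. \<bar>t - z\<bar> < \<epsilon> \<longrightarrow> y t = L t" by blast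
      show False
        by (rule QL[OF fF gF y(1) J2 z(1,2) fa gb fz gz y(2)]) (use y(3) in blast)
    qed
  qed
  moreover have "f \<in> Left z" "g \<in> Right z" unfolding Left_def Right_def using fg z fz gz by auto
  ultimately show "p \<in> (\<Union>s\<in>BP. Left s \<times> Right s)" using fg(1) by blast
qed

lemma card_LR: "card (Left s \<times> Right s) \<le> 2 * card (SS s) + 5"
proof -
  have finL: "finite (Left s)" and finR: "finite (Right s)" using finM unfolding Left_def Right_def by auto
  have injL: "inj_on \<tau> (Left s)" and injR: "inj_on \<tau> (Right s)"
    using tau_inj unfolding Left_def Right_def by (auto intro: inj_on_subset)
  have pl: "(card (Left s) - 1) * (card (Left s) - 2) \<le> 2 * card (SSL s)"
    using pairs_between[OF finL injL] unfolding SSL_def .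
  have pr: "(card (Right s) - 1) * (card (Right s) - 2) \<le> 2 * card (SSR s)"
    using pairs_between[OF finR injR] unfolding SSR_def .
  have disj: "SSL s \<inter> SSR s = {}" unfolding SSL_def SSR_def Left_def Right_def by auto
  have finS: "finite (SSL s)" "finite (SSR s)" unfolding SSL_def SSR_def
    using finL finR by (auto intro: finite_subset[of _ "Left s \<times> Left s"] finite_subset[of _ "Right s \<times> Right s"])
  have "card (SS s) = card (SSL s) + card (SSR s)" unfolding SS_def using card_Un_disjoint[OF finS disj] .
  moreover have "card (Left s \<times> Right s) = card (Left s) * card (Right s)" by (rule card_cartesian_product)
  ultimately show ?thesis using arith_lr[of "card (Left s)" "card (Right s)"] pl pr by linarith
qed

end

context envs begin

lemma main_loc:
  assumes k: "env_complexity J F \<ge> 2000"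
  shows "(1/2000) * (real (env_complexity J F))\<^sup>2 \<le> real (card (off_env_intersections J F))"
proof -
  have kP: "env_complexity J F = card Pcs" unfolding env_complexity_def Pcs_def ..
  have finP: "finite Pcs" using k kP card.infinite by fastforce
  have "Pcs \<noteq> {}" using k kP by auto
  then obtain I1 where I1: "I1 \<in> Pcs" by blast
  have "card (Pcs - {I1}) \<ge> 1" using k kP I1 finP by (simp add: card_Diff_singleton)
  hence "Pcs - {I1} \<noteq> {}"
  proof -
    assume c: "card (Pcs - {I1}) \<ge> 1"
    show ?thesis
    proof
      assume e: "Pcs - {I1} = {}"
      have "card (Pcs - {I1}) = 0" unfolding e by (rule card.empty)
      then show False using c by linarith
    qed
  qed
  then obtain I2 where I2: "I2 \<in> Pcs" "I2 \<noteq> I1" by blast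
  have e1: "I1 \<noteq> {}" "I1 \<subseteq> J" and e2: "I2 \<noteq> {}" "I2 \<subseteq> J" using I1 I2 unfolding Pcs_def envp by auto
  obtain q1 q2 where q: "q1 \<in> J" "q2 \<in> J" "q1 \<noteq> q2"
  proof (cases "I1 - I2 = {}")
    case True
    then obtain x where "x \<in> I2" "x \<notin> I1" using I2(2) by blast
    moreover obtain y where "y \<in> I1" using e1 by blast
    ultimately show ?thesis using that e1 e2 by blast
  next
    case False
    then obtain x where "x \<in> I1" "x \<notin> I2" by blast
    moreover obtain y where "y \<in> I2" using e2 by blast
    ultimately show ?thesis using that e1 e2 by blast
  qed
  define m where "m = card M"
  define kk where "kk = env_complexity J F"
  have km: "kk \<le> 4 * m + 1" using card_Pcs[OF q] kP unfolding m_def kk_def by simp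
  have BPm: "card BP \<le> 4 * m + 1" using card_BP unfolding m_def .
  define OE where "OE = off_env_intersections J F"
  define wit where "wit f g = (SOME t. t\<in>J \<and> f t = g t \<and> L t < f t)" for f g
  define \<phi> where "\<phi> p = ({fst p, snd p}, wit (fst p) (snd p))" for p
  have finO: "finite OE"
  proof -
    have "OE \<subseteq> Pow F \<times> T" unfolding OE_def off_env_intersections_def T_def by auto
    then show ?thesis using finF finT finite_subset by (metis finite_Pow_iff finite_SigmaI)
  qed
  have GO: "card Good \<le> card OE"
  proof (rule card_inj_on_le[of \<phi> Good OE])
    show "inj_on \<phi> Good"
    proof (rule inj_onI)
      fix p p' assume a: "p \<in> Good" "p' \<in> Good" "\<phi> p = \<phi> p'"
      obtain f g where p: "p = (f,g)" "\<tau> f < \<tau> g" using a(1) unfolding Good_def P2_def by auto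
      obtain f' g' where p': "p' = (f',g')" "\<tau> f' < \<tau> g'" using a(2) unfolding Good_def P2_def by auto
      have "{f,g} = {f',g'}" using a(3) p p' unfolding \<phi>_def by simp
      hence "(f = f' \<and> g = g') \<or> (f = g' \<and> g = f')" by (metis doubleton_eq_iff)
      then show "p = p'" using p p' by auto
    qed
    show "\<phi> ` Good \<subseteq> OE"
    proof
      fix x assume "x \<in> \<phi> ` Good"
      then obtain f g where fg: "(f,g) \<in> Good" "x = \<phi> (f,g)" by auto
      have ex: "\<exists>t. t\<in>J \<and> f t = g t \<and> L t < f t" using fg(1) unfolding Good_def by auto
      have w: "wit f g \<in> J \<and> f (wit f g) = g (wit f g) \<and> L (wit f g) < f (wit f g)"
        unfolding wit_def by (rule someI_ex[OF ex])
      have "f \<in> F" "g \<in> F" "\<tau> f < \<tau> g" using fg(1) MF unfolding Good_def P2_def by auto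
      then show "x \<in> OE" unfolding OE_def off_env_intersections_def fg(2) \<phi>_def
        using w unfolding L_def by auto
    qed
    show "finite OE" using finO .
  qed
  have finPP: "finite P2" unfolding P2_def using finM by (auto intro: finite_subset[of _ "M\<times>M"])
  have PC: "m * m - m \<le> 2 * card P2" using pairs_count[OF finM tau_inj] unfolding m_def P2_def .
  have GP: "Good \<subseteq> P2" unfolding Good_def by auto
  have P2split: "card P2 = card Good + card (P2 - Good)"
    using card_Diff_subset[OF finite_subset[OF GP finPP] GP] card_mono[OF finPP GP] by simp
  have finSS: "finite (SS s)" for s unfolding SS_def SSL_def SSR_def Left_def Right_def
    using finM by (auto intro: finite_subset[of _ "M\<times>M"])
  have finLR: "finite (Left s \<times> Right s)" for s unfolding Left_def Right_def using finM by auto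
  have "card (P2 - Good) \<le> card (\<Union>s\<in>BP. Left s \<times> Right s)"
    by (rule card_mono[OF _ bad_BP]) (use finBP finLR in auto)
  also have "\<dots> \<le> (\<Sum>s\<in>BP. card (Left s \<times> Right s))" by (rule card_UN_le[OF finBP])
  also have "\<dots> \<le> (\<Sum>s\<in>BP. 2 * card (SS s) + 5)" by (rule sum_mono) (rule card_LR)
  also have "\<dots> = 2 * (\<Sum>s\<in>BP. card (SS s)) + 5 * card BP" by (simp add: sum.distrib sum_distrib_left)
  also have "(\<Sum>s\<in>BP. card (SS s)) = card (\<Union>s\<in>BP. SS s)"
  proof (rule card_UN_disjoint[symmetric, OF finBP])
    show "\<forall>i\<in>BP. finite (SS i)" using finSS by blast
    show "\<forall>i\<in>BP. \<forall>j\<in>BP. i \<noteq> j \<longrightarrow> SS i \<inter> SS j = {}" using SS_disj BP_def by auto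
  qed
  also have "card (\<Union>s\<in>BP. SS s) \<le> card Good"
  proof (rule card_mono)
    show "finite Good" using finite_subset[OF GP finPP] .
    have "\<And>s. s \<in> BP \<Longrightarrow> SS s \<subseteq> Good" using SS_good unfolding BP_def by blast
    then show "(\<Union>s\<in>BP. SS s) \<subseteq> Good" by blast
  qed
  finally have bad: "card (P2 - Good) \<le> 2 * card Good + 5 * card BP" by simp
  define G where "G = card Good"
  have r1: "real m * real m - real m \<le> 2 * (3 * real G + 5 * (4 * real m + 1))"
  proof -
    define X where "X = card (P2 - Good)"
    define Y where "Y = card BP"
    define Z where "Z = card P2"
    have "Z = G + X" "X \<le> 2 * G + 5 * Y" "Y \<le> 4 * m + 1" using P2split bad BPm unfolding G_def X_def Y_def Z_def by auto
    hence "2 * Z \<le> 2 * (3 * G + 5 * (4 * m + 1))" by presburger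
    hence "2 * card P2 \<le> 2 * (3 * G + 5 * (4 * m + 1))" unfolding Z_def .
    hence "m * m - m \<le> 2 * (3 * G + 5 * (4 * m + 1))" using PC by (rule le_trans[rotated])
    moreover have "m \<le> m * m" by (cases m) auto
    ultimately have "real (m * m - m) \<le> real (2 * (3 * G + 5 * (4 * m + 1)))" by linarith
    then show ?thesis using \<open>m \<le> m * m\<close> by (simp add: of_nat_diff)
  qed
  have kr: "real kk \<le> 4 * real m + 1" "real kk \<ge> 2000" using km k unfolding kk_def by linarith+
  have m499: "real m \<ge> 499" using kr by linarith
  have s1: "(real kk)\<^sup>2 \<le> (4 * real m + 1)\<^sup>2" using kr by (intro power_mono) auto
  have mm: "499 * real m \<le> real m * real m" using m499 by (intro mult_right_mono) auto
  have e1: "(4 * real m + 1)\<^sup>2 = 16 * (real m * real m) + 8 * real m + 1" by (simp add: power2_eq_square algebra_simps)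
  have e2: "(real kk)\<^sup>2 \<le> 16 * (real m * real m) + 8 * real m + 1" using s1 e1 by simp
  have s4: "real m * real m \<le> 12 * real G" using r1 mm m499 by (smt (verit))
  have "(real kk)\<^sup>2 \<le> 2000 * real G" using e2 s4 mm m499 by linarith
  hence "(1/2000) * (real kk)\<^sup>2 \<le> real G" by linarith
  moreover have "real G \<le> real (card OE)" using GO unfolding G_def by simp
  ultimately show ?thesis unfolding kk_def OE_def by linarith
qed

end

theorem mainTheorem12:
  shows "\<exists>c::real. c > 0 \<and> (\<exists>k0::nat. \<forall>(J::real set) (F::(real \<Rightarrow> real) set).
    is_interval J \<longrightarrow> finite F \<longrightarrow>
    (\<forall>f\<in>F. \<forall>g\<in>F. f \<noteq> g \<longrightarrow> (\<exists>t\<in>J. f t \<noteq> g t)) \<longrightarrow>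
    (\<forall>f\<in>F. sqrt_quadratic_on J f) \<longrightarrow>
    env_complexity J F \<ge> k0 \<longrightarrow>
    c * (real (env_complexity J F))\<^sup>2 \<le> real (card (off_env_intersections J F)))"
proof (intro exI[of _ "1/2000"] conjI exI[of _ "2000::nat"] allI impI)
  show "(0::real) < 1/2000" by simp
  fix J :: "real set" and F :: "(real \<Rightarrow> real) set"
  assume J: "is_interval J" and finF: "finite F"
    and dist: "\<forall>f\<in>F. \<forall>g\<in>F. f \<noteq> g \<longrightarrow> (\<exists>t\<in>J. f t \<noteq> g t)"
    and sq: "\<forall>f\<in>F. sqrt_quadratic_on J f" and k: "2000 \<le> env_complexity J F"
  have neF: "F \<noteq> {}"
  proof
    assume "F = {}"
    hence "\<And>I. \<not> env_piece J F I" unfolding env_piece_def by simp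
    hence E: "{I. env_piece J F I \<and> (\<forall>I'. env_piece J F I' \<and> I \<subseteq> I' \<longrightarrow> I' = I)} = {}"
      by simp
    have "env_complexity J F = 0" unfolding env_complexity_def E by (rule card.empty)
    then show False using k by simp
  qed
  have "\<forall>f\<in>F. \<exists>abc. \<forall>t\<in>J. fst abc * t\<^sup>2 + fst (snd abc) * t + snd (snd abc) \<ge> 0 \<and>
      f t = sqrt (fst abc * t\<^sup>2 + fst (snd abc) * t + snd (snd abc))"
  proof
    fix f assume "f \<in> F"
    then obtain a b c where "\<forall>t\<in>J. a * t\<^sup>2 + b * t + c \<ge> 0 \<and> f t = sqrt (a * t\<^sup>2 + b * t + c)"
      using sq unfolding sqrt_quadratic_on_def by blast
    then show "\<exists>abc. \<forall>t\<in>J. fst abc * t\<^sup>2 + fst (snd abc) * t + snd (snd abc) \<ge> 0 \<and>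
      f t = sqrt (fst abc * t\<^sup>2 + fst (snd abc) * t + snd (snd abc))"
      by (intro exI[of _ "(a,b,c)"]) simp
  qed
  then obtain h where h: "\<forall>f\<in>F. \<forall>t\<in>J. fst (h f) * t\<^sup>2 + fst (snd (h f)) * t + snd (snd (h f)) \<ge> 0 \<and>
      f t = sqrt (fst (h f) * t\<^sup>2 + fst (snd (h f)) * t + snd (snd (h f)))"
    by (metis bchoice)
  interpret envs J F "\<lambda>f. fst (h f)" "\<lambda>f. fst (snd (h f))" "\<lambda>f. snd (snd (h f))"
  proof
    show "is_interval J" by fact
    show "finite F" by fact
    show "F \<noteq> {}" by fact
    show "\<And>f g. f \<in> F \<Longrightarrow> g \<in> F \<Longrightarrow> f \<noteq> g \<Longrightarrow> \<exists>t\<in>J. f t \<noteq> g t" using dist by blast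
    show "\<And>f t. f \<in> F \<Longrightarrow> t \<in> J \<Longrightarrow> 0 \<le> fst (h f) * t\<^sup>2 + fst (snd (h f)) * t + snd (snd (h f)) \<and>
      f t = sqrt (fst (h f) * t\<^sup>2 + fst (snd (h f)) * t + snd (snd (h f)))" using h by blast
  qed
  show "1/2000 * (real (env_complexity J F))\<^sup>2 \<le> real (card (off_env_intersections J F))"
    using main_loc k by simp
qed

end
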